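(* For $\alpha,\beta\in\mathbb{K}^\times$ with $\alpha\beta\neq1$ let $A_{5,\alpha,\beta}$ be the evolution algebra over the field $\mathbb{K}$ with natural basis $\{e_1,e_2\}$ such that $e_1^2=e_1+\beta e_2$ and $e_2^2=\alpha e_1+e_2$. For such pairs $(\alpha,\beta)$ and $(\alpha',\beta')$, $A_{5,\alpha,\beta}$ is isomorphic to $A_{5,\alpha',\beta'}$ as a $\mathbb{K}$-algebra if and only if $(\alpha,\beta)=(\alpha',\beta')$ or $(\alpha,\beta)=(\beta',\alpha')$.
   Context: An evolution algebra over $\mathbb{K}$ is a $\mathbb{K}$-algebra with a basis $\{e_i\}$ (natural basis) such that $e_ie_j=0$ for $i\neq j$. *)

theory Defs
  imports Main
begin

text \<open>A two-dimensional algebra over a field 'a is modelled on 'a \<times> 'a, with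
  (x1, x2) standing for x1 e1 + x2 e2 in the natural basis {e1, e2}.\<close>

definition vadd :: "'a::field \<times> 'a \<Rightarrow> 'a \<times> 'a \<Rightarrow> 'a \<times> 'a" where
  "vadd x y = (fst x + fst y, snd x + snd y)"

definition smul :: "'a::field \<Rightarrow> 'a \<times> 'a \<Rightarrow> 'a \<times> 'a" where
  "smul c x = (c * fst x, c * snd x)"

text \<open>Multiplication of the two-dimensional evolution algebra with natural basis
  {e1, e2}, e1 e2 = e2 e1 = 0, e1^2 = (fst s1) e1 + (snd s1) e2, e2^2 = (fst s2) e1 + (snd s2) e2,
  extended bilinearly.\<close>

definition evo2_mult :: "'a::field \<times> 'a \<Rightarrow> 'a \<times> 'a \<Rightarrow> 'a \<times> 'a \<Rightarrow> 'a \<times> 'a \<Rightarrow> 'a \<times> 'a" where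
  "evo2_mult s1 s2 x y =
     vadd (smul (fst x * fst y) s1) (smul (snd x * snd y) s2)"

definition A5_mult :: "'a::field \<Rightarrow> 'a \<Rightarrow> 'a \<times> 'a \<Rightarrow> 'a \<times> 'a \<Rightarrow> 'a \<times> 'a" where
  "A5_mult \<alpha> \<beta> = evo2_mult (1, \<beta>) (\<alpha>, 1)"

definition alg_iso :: "('a::field \<times> 'a \<Rightarrow> 'a \<times> 'a \<Rightarrow> 'a \<times> 'a)
     \<Rightarrow> ('a \<times> 'a \<Rightarrow> 'a \<times> 'a \<Rightarrow> 'a \<times> 'a) \<Rightarrow> ('a \<times> 'a \<Rightarrow> 'a \<times> 'a) \<Rightarrow> bool" where
  "alg_iso m1 m2 f \<longleftrightarrow> bij f
     \<and> (\<forall>x y. f (vadd x y) = vadd (f x) (f y))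
     \<and> (\<forall>c x. f (smul c x) = smul c (f x))
     \<and> (\<forall>x y. f (m1 x y) = m2 (f x) (f y))"

definition alg_isomorphic :: "('a::field \<times> 'a \<Rightarrow> 'a \<times> 'a \<Rightarrow> 'a \<times> 'a)
     \<Rightarrow> ('a \<times> 'a \<Rightarrow> 'a \<times> 'a \<Rightarrow> 'a \<times> 'a) \<Rightarrow> bool" where
  "alg_isomorphic m1 m2 \<longleftrightarrow> (\<exists>f. alg_iso m1 m2 f)"

end

theory Submission
  imports Defs
begin

lemma A5_eval: "A5_mult a b x y = (fst x * fst y + snd x * snd y * a, fst x * fst y * b + snd x * snd y)"
  by (simp add: A5_mult_def evo2_mult_def vadd_def smul_def)

lemma fwd:
  fixes \<alpha> \<beta> \<alpha>' \<beta>' :: "'a::field"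
  assumes h: "\<alpha>' * \<beta>' \<noteq> 1" and iso: "alg_iso (A5_mult \<alpha> \<beta>) (A5_mult \<alpha>' \<beta>') f"
  shows "(\<alpha>, \<beta>) = (\<alpha>', \<beta>') \<or> (\<alpha>, \<beta>) = (\<beta>', \<alpha>')"
proof -
  have bij: "bij f" and sm: "\<And>c x. f (smul c x) = smul c (f x)"
    and mu: "\<And>x y. f (A5_mult \<alpha> \<beta> x y) = A5_mult \<alpha>' \<beta>' (f x) (f y)"
    and ad: "\<And>x y. f (vadd x y) = vadd (f x) (f y)"
    using iso unfolding alg_iso_def by auto
  obtain a b where ab: "f (1,0) = (a,b)" by (cases "f (1,0)") auto
  obtain p q where pq: "f (0,1) = (p,q)" by (cases "f (0,1)") auto
  have f0: "f (0,0) = (0,0)" using sm[of 0 "(0,0)"] by (simp add: smul_def)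
  have n1: "(a,b) \<noteq> (0,0)" using bij f0 ab unfolding bij_def inj_def by (metis zero_neq_one fst_conv)
  have n2: "(p,q) \<noteq> (0,0)" using bij f0 pq unfolding bij_def inj_def by (metis zero_neq_one snd_conv)
  have "f (A5_mult \<alpha> \<beta> (1,0) (0,1)) = (0,0)" using f0 by (simp add: A5_eval)
  hence e: "a*p + b*q*\<alpha>' = 0" "a*p*\<beta>' + b*q = 0" using mu[of "(1,0)" "(0,1)"] ab pq by (simp_all add: A5_eval)
  have "b*q*(1 - \<alpha>'*\<beta>') = 0"
  proof -
    have "a*p = - (b*q*\<alpha>')" using e(1) by (simp add: eq_neg_iff_add_eq_0)
    hence "- (b*q*\<alpha>')*\<beta>' + b*q = 0" using e(2) by simp
    thus ?thesis by (simp add: algebra_simps)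
  qed
  hence bq: "b*q = 0" using h by simp
  have ap: "a*p = 0" using e(1) bq by simp
  have lin: "f (x1, x2) = (x1*a + x2*p, x1*b + x2*q)" for x1 x2
  proof -
    have "(x1,x2) = vadd (smul x1 (1,0)) (smul x2 (0,1))" by (simp add: vadd_def smul_def)
    hence "f (x1,x2) = vadd (smul x1 (f (1,0))) (smul x2 (f (0,1)))" using ad sm by metis
    thus ?thesis using ab pq by (simp add: vadd_def smul_def)
  qed
  have s1: "f (A5_mult \<alpha> \<beta> (1,0) (1,0)) = A5_mult \<alpha>' \<beta>' (a,b) (a,b)" using mu ab by metis
  have s2: "f (A5_mult \<alpha> \<beta> (0,1) (0,1)) = A5_mult \<alpha>' \<beta>' (p,q) (p,q)" using mu pq by metis
  have s1': "a + \<beta>*p = a*a + b*b*\<alpha>'" "b + \<beta>*q = a*a*\<beta>' + b*b"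
    using s1 by (simp_all add: A5_eval lin)
  have s2': "\<alpha>*a + p = p*p + q*q*\<alpha>'" "\<alpha>*b + q = p*p*\<beta>' + q*q"
    using s2 by (simp_all add: A5_eval lin)
  show ?thesis
  proof (cases "a = 0")
    case False
    hence p0: "p = 0" using ap by simp
    hence q: "q \<noteq> 0" using n2 by simp
    hence b0: "b = 0" using bq by simp
    have "a*a = a*1" using s1'(1) p0 b0 by simp
    hence a1: "a = 1" using False by simp
    have "q*q = q*1" using s2'(2) p0 b0 by simp
    hence q1: "q = 1" using q by simp
    show ?thesis using s1'(2) s2'(1) a1 q1 p0 b0 by simp
  next
    case True
    hence b: "b \<noteq> 0" using n1 by simp
    hence q0: "q = 0" using bq by simp
    hence p: "p \<noteq> 0" using n2 by simp
    have "b*b = b*1" using s1'(2) True q0 by simp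
    hence b1: "b = 1" using b by simp
    have "p*p = p*1" using s2'(1) True q0 by simp
    hence p1: "p = 1" using p by simp
    show ?thesis using s1'(1) s2'(2) b1 p1 True q0 by simp
  qed
qed

theorem lemma3p6:
  fixes \<alpha> \<beta> \<alpha>' \<beta>' :: "'a::field"
  assumes "\<alpha> \<noteq> 0" and "\<beta> \<noteq> 0" and "\<alpha> * \<beta> \<noteq> 1"
      and "\<alpha>' \<noteq> 0" and "\<beta>' \<noteq> 0" and "\<alpha>' * \<beta>' \<noteq> 1"
  shows "alg_isomorphic (A5_mult \<alpha> \<beta>) (A5_mult \<alpha>' \<beta>')
         \<longleftrightarrow> ((\<alpha>, \<beta>) = (\<alpha>', \<beta>') \<or> (\<alpha>, \<beta>) = (\<beta>', \<alpha>'))"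
proof
  assume "alg_isomorphic (A5_mult \<alpha> \<beta>) (A5_mult \<alpha>' \<beta>')"
  then obtain f where "alg_iso (A5_mult \<alpha> \<beta>) (A5_mult \<alpha>' \<beta>') f" unfolding alg_isomorphic_def by blast
  thus "(\<alpha>, \<beta>) = (\<alpha>', \<beta>') \<or> (\<alpha>, \<beta>) = (\<beta>', \<alpha>')" using fwd assms(6) by blast
next
  assume "(\<alpha>, \<beta>) = (\<alpha>', \<beta>') \<or> (\<alpha>, \<beta>) = (\<beta>', \<alpha>')"
  thus "alg_isomorphic (A5_mult \<alpha> \<beta>) (A5_mult \<alpha>' \<beta>')"
  proof
    assume "(\<alpha>, \<beta>) = (\<alpha>', \<beta>')"
    thus ?thesis unfolding alg_isomorphic_def alg_iso_def by (intro exI[of _ id]) auto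
  next
    assume e: "(\<alpha>, \<beta>) = (\<beta>', \<alpha>')"
    have "bij (\<lambda>(x::'a,y::'a). (y,x))" by (rule bijI) (auto simp: inj_def surj_def)
    moreover have "\<forall>x y. (\<lambda>(x,y). (y,x)) (A5_mult \<alpha> \<beta> x y) = A5_mult \<alpha>' \<beta>' ((\<lambda>(x,y). (y,x)) x) ((\<lambda>(x,y). (y,x)) y)"
      using e by (auto simp: A5_eval algebra_simps split: prod.splits)
    ultimately show ?thesis unfolding alg_isomorphic_def alg_iso_def
      by (intro exI[of _ "\<lambda>(x,y). (y,x)"]) (auto simp: vadd_def smul_def split: prod.splits)
  qed
qed

end
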